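(* Let $G$ be a graph whose vertex set $V(G)$ is partitioned into an independent set $S$ and a clique $K$ (so $G$ is a split graph). Suppose that for any three distinct vertices $u,v,w\in S$ there exist two distinct vertices $x,y\in\{u,v,w\}$ with $N_G(x)\supseteq N_G(y)$. Then $G$ is an interval graph.
   Context: All graphs are finite, simple and undirected. $N_G(v)$ denotes the set of neighbors of $v$ in $G$. An interval graph is the intersection graph of a finite family of closed intervals on the real line. *)

theory Defs
  imports Complex_Main
begin

definition simple_graph :: "'a set \<Rightarrow> ('a \<Rightarrow> 'a \<Rightarrow> bool) \<Rightarrow> bool" where
  "simple_graph V E \<longleftrightarrow> finite V \<and> (\<forall>u v. E u v \<longrightarrow> u \<in> V \<and> v \<in> V)
     \<and> (\<forall>u v. E u v \<longrightarrow> E v u) \<and> (\<forall>v. \<not> E v v)"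

definition nbhd :: "'a set \<Rightarrow> ('a \<Rightarrow> 'a \<Rightarrow> bool) \<Rightarrow> 'a \<Rightarrow> 'a set" where
  "nbhd V E v = {u \<in> V. E v u}"

definition independent_set :: "'a set \<Rightarrow> ('a \<Rightarrow> 'a \<Rightarrow> bool) \<Rightarrow> 'a set \<Rightarrow> bool" where
  "independent_set V E S \<longleftrightarrow> S \<subseteq> V \<and> (\<forall>u\<in>S. \<forall>v\<in>S. \<not> E u v)"

definition clique :: "'a set \<Rightarrow> ('a \<Rightarrow> 'a \<Rightarrow> bool) \<Rightarrow> 'a set \<Rightarrow> bool" where
  "clique V E K \<longleftrightarrow> K \<subseteq> V \<and> (\<forall>u\<in>K. \<forall>v\<in>K. u \<noteq> v \<longrightarrow> E u v)"

definition interval_graph :: "'a set \<Rightarrow> ('a \<Rightarrow> 'a \<Rightarrow> bool) \<Rightarrow> bool" where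
  "interval_graph V E \<longleftrightarrow> (\<exists>l r :: 'a \<Rightarrow> real.
     (\<forall>v\<in>V. l v \<le> r v) \<and>
     (\<forall>u\<in>V. \<forall>v\<in>V. u \<noteq> v \<longrightarrow> (E u v \<longleftrightarrow> {l u..r u} \<inter> {l v..r v} \<noteq> {})))"

end

theory Submission
  imports Defs
begin

definition cmp :: "('a \<Rightarrow> 'b set) \<Rightarrow> 'a \<Rightarrow> 'a \<Rightarrow> bool" where
  "cmp f x y \<longleftrightarrow> f x \<subseteq> f y \<or> f y \<subseteq> f x"

lemma two_chains:
  assumes "finite P" "\<forall>x\<in>P. finite (f x)"
    and "\<forall>u\<in>P. \<forall>v\<in>P. \<forall>w\<in>P. u\<noteq>v \<and> u\<noteq>w \<and> v\<noteq>w \<longrightarrow> cmp f u v \<or> cmp f u w \<or> cmp f v w"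
  shows "\<exists>A B. A \<union> B = P \<and> (\<forall>y\<in>A. \<forall>z\<in>A. cmp f y z) \<and> (\<forall>y\<in>B. \<forall>z\<in>B. cmp f y z)"
  using assms
proof (induction "card P" arbitrary: P rule: less_induct)
  case less
  show ?case
  proof (cases "P = {}")
    case True then show ?thesis by auto
  next
    case False
    have fin: "finite (card ` f ` P)" using less.prems by auto
    obtain x where x: "x \<in> P" "card (f x) = Max (card ` f ` P)"
    proof -
      have "card ` f ` P \<noteq> {}" using False by auto
      from Max_in[OF fin this] show ?thesis using that by auto
    qed
    have xmax: "\<forall>y\<in>P. card (f y) \<le> card (f x)" using x fin by auto
    have key: "f y \<subseteq> f x" if "y \<in> P" "cmp f y x" for y
    proof -
      { assume "f x \<subseteq> f y"
        moreover have "card (f y) \<le> card (f x)" using xmax that by auto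
        moreover have "finite (f y)" using less.prems that by auto
        ultimately have "f x = f y" by (simp add: card_seteq)
      }
      then show ?thesis using that(2) unfolding cmp_def by auto
    qed
    define U where "U = {y \<in> P. \<not> cmp f y x}"
    have cmpsym: "cmp f a b \<longleftrightarrow> cmp f b a" for a b unfolding cmp_def by auto
    have cmprefl: "cmp f a a" for a unfolding cmp_def by auto
    show ?thesis
    proof (cases "U = {}")
      case True
      have "card (P - {x}) < card P" using x less.prems by (metis card_Diff1_less)
      moreover have "finite (P - {x})" using less.prems by auto
      ultimately obtain A B where AB: "A \<union> B = P - {x}" "\<forall>y\<in>A. \<forall>z\<in>A. cmp f y z" "\<forall>y\<in>B. \<forall>z\<in>B. cmp f y z"
        using less.hyps[of "P - {x}"] less.prems by auto
      have "\<forall>y\<in>P. cmp f y x" using True U_def by auto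
      then have "\<forall>y\<in>insert x A. \<forall>z\<in>insert x A. cmp f y z"
        using AB cmpsym cmprefl by auto
      then show ?thesis using AB x by (intro exI[of _ "insert x A"] exI[of _ B]) auto
    next
      case False
      have Uch: "\<forall>u\<in>U. \<forall>v\<in>U. cmp f u v"
      proof (intro ballI)
        fix u v assume uv: "u \<in> U" "v \<in> U"
        show "cmp f u v"
        proof (cases "u = v")
          case True then show ?thesis using cmprefl by simp
        next
          case False
          have "x \<notin> U" using cmprefl U_def by auto
          then have "u \<noteq> x" "v \<noteq> x" using uv by auto
          moreover have "u \<in> P" "v \<in> P" "\<not> cmp f u x" "\<not> cmp f v x" using uv U_def by auto
          ultimately show ?thesis using less.prems(3) x(1) False by metis
        qed
      qed
      have finU: "finite (card ` f ` U)" using less.prems U_def by auto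
      obtain m where m: "m \<in> U" "card (f m) = Min (card ` f ` U)"
      proof -
        have "card ` f ` U \<noteq> {}" using False by auto
        from Min_in[OF finU this] show ?thesis using that by auto
      qed
      have mmin: "f m \<subseteq> f u" if "u \<in> U" for u
      proof -
        have c: "card (f m) \<le> card (f u)" using m that finU by auto
        have "finite (f m)" using less.prems m U_def by auto
        moreover { assume "f u \<subseteq> f m" with c \<open>finite (f m)\<close> have "f u = f m"
            using card_seteq by blast }
        ultimately show ?thesis using Uch m that unfolding cmp_def by auto
      qed
      define R where "R = P - {x} - U"
      have sub: "insert m R \<subseteq> P" using m U_def R_def by auto
      have "x \<notin> insert m R" using R_def m U_def cmprefl by auto
      then have "insert m R \<subset> P" using sub x by auto
      then have "card (insert m R) < card P" by (rule psubset_card_mono[OF less.prems(1)])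
      moreover have "finite (insert m R)" using sub less.prems(1) by (rule finite_subset)
      ultimately obtain A0 B0 where AB0: "A0 \<union> B0 = insert m R" "\<forall>y\<in>A0. \<forall>z\<in>A0. cmp f y z" "\<forall>y\<in>B0. \<forall>z\<in>B0. cmp f y z"
        using less.hyps[of "insert m R"] less.prems sub by (smt (verit) subset_iff)
      then obtain A B where AB: "A \<union> B = insert m R" "\<forall>y\<in>A. \<forall>z\<in>A. cmp f y z" "\<forall>y\<in>B. \<forall>z\<in>B. cmp f y z" "m \<in> B"
      proof (cases "m \<in> B0")
        case True then show ?thesis using that AB0 by blast
      next
        case False then have "m \<in> A0" using AB0(1) by auto
        then show ?thesis using that[of B0 A0] AB0 by (simp add: Un_commute)
      qed
      have C1: "\<forall>y\<in>insert x (A - {m}). \<forall>z\<in>insert x (A - {m}). cmp f y z"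
      proof -
        have "\<forall>y\<in>A - {m}. cmp f y x" using AB(1) R_def U_def by auto
        then show ?thesis using AB(2) cmpsym cmprefl by auto
      qed
      have C2: "\<forall>y\<in>B \<union> U. \<forall>z\<in>B \<union> U. cmp f y z"
      proof -
        have "cmp f y u" if "y \<in> B" "u \<in> U" for y u
        proof (cases "y = m")
          case True then show ?thesis using mmin that unfolding cmp_def by auto
        next
          case False
          then have yR: "y \<in> R" using AB(1) that by auto
          then have yx: "f y \<subseteq> f x" using key R_def U_def by auto
          have "cmp f y m" using AB that by auto
          moreover have "\<not> f m \<subseteq> f y"
          proof
            assume "f m \<subseteq> f y"
            then have "cmp f m x" using yx unfolding cmp_def by auto
            then show False using m U_def by auto
          qed
          ultimately have "f y \<subseteq> f m" unfolding cmp_def by auto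
          then show ?thesis using mmin[OF that(2)] unfolding cmp_def by auto
        qed
        then show ?thesis using AB(3) Uch cmpsym by (metis Un_iff)
      qed
      have "insert x (A - {m}) \<union> (B \<union> U) = P" using AB(1,4) R_def U_def x m by auto
      then show ?thesis using C1 C2 by blast
    qed
  qed
qed


theorem lemma2p3:
  fixes V :: "'a set" and E :: "'a \<Rightarrow> 'a \<Rightarrow> bool" and S K :: "'a set"
  assumes "simple_graph V E"
    and "S \<union> K = V" and "S \<inter> K = {}"
    and "independent_set V E S" and "clique V E K"
    and "\<forall>u\<in>S. \<forall>v\<in>S. \<forall>w\<in>S. u \<noteq> v \<and> u \<noteq> w \<and> v \<noteq> w \<longrightarrow>
           (\<exists>x\<in>{u, v, w}. \<exists>y\<in>{u, v, w}. x \<noteq> y \<and> nbhd V E y \<subseteq> nbhd V E x)"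
  shows "interval_graph V E"
proof -
  define f where "f = nbhd V E"
  have finV: "finite V" using assms(1) unfolding simple_graph_def by auto
  have Esym: "E u v \<Longrightarrow> E v u" for u v using assms(1) unfolding simple_graph_def by auto
  have finS: "finite S" using finV assms(2) by auto
  have ff: "\<forall>x\<in>S. finite (f x)" using finV unfolding f_def nbhd_def by auto
  have cmpsym: "cmp f a b \<longleftrightarrow> cmp f b a" for a b unfolding cmp_def by auto
  have w3: "\<forall>u\<in>S. \<forall>v\<in>S. \<forall>w\<in>S. u\<noteq>v \<and> u\<noteq>w \<and> v\<noteq>w \<longrightarrow> cmp f u v \<or> cmp f u w \<or> cmp f v w"
  proof (intro ballI impI)
    fix u v w assume "u \<in> S" "v \<in> S" "w \<in> S" "u\<noteq>v \<and> u\<noteq>w \<and> v\<noteq>w"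
    then have "\<exists>x\<in>{u,v,w}. \<exists>y\<in>{u,v,w}. x \<noteq> y \<and> f y \<subseteq> f x"
      using assms(6) unfolding f_def by simp
    then show "cmp f u v \<or> cmp f u w \<or> cmp f v w" unfolding cmp_def by auto
  qed
  obtain A B0 where AB0: "A \<union> B0 = S" "\<forall>y\<in>A. \<forall>z\<in>A. cmp f y z" "\<forall>y\<in>B0. \<forall>z\<in>B0. cmp f y z"
    using two_chains[OF finS ff w3] by blast
  define B where "B = B0 - A"
  have AB: "A \<union> B = S" "A \<inter> B = {}" "\<forall>y\<in>A. \<forall>z\<in>A. cmp f y z" "\<forall>y\<in>B. \<forall>z\<in>B. cmp f y z"
    using AB0 unfolding B_def by auto
  obtain g n where g: "g ` S = {i::nat. i < n}" "inj_on g S"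
    using finite_imp_inj_to_nat_seg[OF finS] by blast
  have gn: "g s < n" if "s \<in> S" for s using g that by auto
  define key where "key s = card (f s) * n + g s" for s
  have keymono: "key s < key t" if "s \<in> S" "t \<in> S" "f s \<subseteq> f t" "f s \<noteq> f t" for s t
  proof -
    have "f s \<subset> f t" using that by auto
    moreover have "finite (f t)" using that ff by auto
    ultimately have "card (f s) < card (f t)" by (simp add: psubset_card_mono)
    then have "(card (f s) + 1) * n \<le> card (f t) * n" by (intro mult_le_mono1) simp
    then show ?thesis unfolding key_def using gn[OF that(1)] by simp
  qed
  have keyinj: "s = t" if "s \<in> S" "t \<in> S" "key s = key t" for s t
  proof -
    have "key s mod n = g s" "key t mod n = g t" unfolding key_def using gn that by auto
    then show ?thesis using g(2) that unfolding inj_on_def by metis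
  qed
  define p where "p s = (if s \<in> A then -1 else 1) / (real (key s) + 1)" for s
  have pA: "p s < 0" if "s \<in> A" for s using that unfolding p_def by (simp add: divide_neg_pos)
  have pB: "p s > 0" if "s \<in> B" for s using that AB(2) unfolding p_def by auto
  have pAle: "key t \<le> key s" if "s \<in> A" "t \<in> A" "p t \<le> p s" for s t
    using that unfolding p_def by (simp add: divide_simps)
  have pBle: "key t \<le> key s" if "s \<in> B" "t \<in> B" "p s \<le> p t" for s t
  proof -
    have "s \<notin> A" "t \<notin> A" using that AB(2) by auto
    then show ?thesis using that unfolding p_def by (simp add: divide_simps)
  qed
  have chain_key: "k \<in> f s" if "s \<in> S" "t \<in> S" "cmp f t s" "key t \<le> key s" "k \<in> f t" for s t k
  proof -
    have "f t \<subseteq> f s"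
    proof (rule ccontr)
      assume "\<not> f t \<subseteq> f s"
      then have "f s \<subseteq> f t" "f s \<noteq> f t" using that(3) unfolding cmp_def by auto
      then show False using keymono[OF that(1,2)] that(4) by auto
    qed
    then show ?thesis using that by auto
  qed
  define Lk where "Lk k = Min (insert 0 (p ` {s \<in> A. k \<in> f s}))" for k
  define Rk where "Rk k = Max (insert 0 (p ` {s \<in> B. k \<in> f s}))" for k
  have finA: "finite A" "finite B" using finS AB(1) by auto
  have Lk0: "Lk k \<le> 0" for k unfolding Lk_def using finA by simp
  have Rk0: "Rk k \<ge> 0" for k unfolding Rk_def using finA by simp
  have LkA: "Lk k \<le> p s \<longleftrightarrow> k \<in> f s" if "s \<in> A" for s k
  proof
    assume "k \<in> f s" then show "Lk k \<le> p s" unfolding Lk_def using finA that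
      by (intro Min_le) auto
  next
    assume h: "Lk k \<le> p s"
    have "Lk k \<in> insert 0 (p ` {s \<in> A. k \<in> f s})" unfolding Lk_def using finA
      by (intro Min_in) auto
    moreover have "Lk k \<noteq> 0" using h pA[OF that] by auto
    ultimately obtain t where t: "t \<in> A" "k \<in> f t" "Lk k = p t" by auto
    have "key t \<le> key s" using pAle[OF that t(1)] h t by simp
    then show "k \<in> f s" using chain_key[of s t k] that t AB by auto
  qed
  have RkB: "p s \<le> Rk k \<longleftrightarrow> k \<in> f s" if "s \<in> B" for s k
  proof
    assume "k \<in> f s" then show "p s \<le> Rk k" unfolding Rk_def using finA that
      by (intro Max_ge) auto
  next
    assume h: "p s \<le> Rk k"
    have "Rk k \<in> insert 0 (p ` {s \<in> B. k \<in> f s})" unfolding Rk_def using finA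
      by (intro Max_in) auto
    moreover have "Rk k \<noteq> 0" using h pB[OF that] by auto
    ultimately obtain t where t: "t \<in> B" "k \<in> f t" "Rk k = p t" by auto
    have "key t \<le> key s" using pBle[OF that t(1)] h t by simp
    then show "k \<in> f s" using chain_key[of s t k] that t AB by auto
  qed
  have pinj: "p s \<noteq> p t" if "s \<in> S" "t \<in> S" "s \<noteq> t" for s t
  proof
    assume h: "p s = p t"
    have "key s = key t"
    proof (cases "s \<in> A")
      case True
      then have "t \<in> A" using h pA pB AB(1) that(2) by (metis Un_iff less_asym)
      then show ?thesis using pAle[OF True] pAle[OF \<open>t\<in>A\<close> True] h by force
    next
      case False
      then have sB: "s \<in> B" using AB(1) that by auto
      then have "t \<in> B" using h pA pB AB(1) that(2) by (metis Un_iff less_asym)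
      then show ?thesis using pBle[OF sB] pBle[OF \<open>t\<in>B\<close> sB] h by force
    qed
    then show False using keyinj that by auto
  qed
  define l where "l v = (if v \<in> S then p v else Lk v)" for v
  define r where "r v = (if v \<in> S then p v else Rk v)" for v
  have SK: "E u v \<longleftrightarrow> {l u..r u} \<inter> {l v..r v} \<noteq> {}" if "u \<in> S" "v \<in> K" for u v
  proof -
    have vS: "v \<notin> S" "v \<in> V" using that assms(2,3) by auto
    have "E u v \<longleftrightarrow> v \<in> f u" using vS unfolding f_def nbhd_def by auto
    moreover have "{l u..r u} \<inter> {l v..r v} \<noteq> {} \<longleftrightarrow> Lk v \<le> p u \<and> p u \<le> Rk v"
      unfolding l_def r_def using that vS by auto
    moreover have "Lk v \<le> p u \<and> p u \<le> Rk v \<longleftrightarrow> v \<in> f u"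
    proof (cases "u \<in> A")
      case True then show ?thesis using LkA[OF True] pA[OF True] Rk0[of v] by auto
    next
      case False then have "u \<in> B" using AB(1) that by auto
      then show ?thesis using RkB[OF \<open>u\<in>B\<close>] pB[OF \<open>u\<in>B\<close>] Lk0[of v] by auto
    qed
    ultimately show ?thesis by simp
  qed
  have lr: "\<forall>v\<in>V. l v \<le> r v" unfolding l_def r_def using Lk0 Rk0
      by (auto intro: order_trans)
  have main: "\<forall>u\<in>V. \<forall>v\<in>V. u \<noteq> v \<longrightarrow> (E u v \<longleftrightarrow> {l u..r u} \<inter> {l v..r v} \<noteq> {})"
  proof (intro ballI impI)
    fix u v assume uv: "u \<in> V" "v \<in> V" "u \<noteq> v"
    show "E u v \<longleftrightarrow> {l u..r u} \<inter> {l v..r v} \<noteq> {}"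
    proof (cases "u \<in> S")
      case uS: True
      show ?thesis
      proof (cases "v \<in> S")
        case True
        have "\<not> E u v" using assms(4) uS True unfolding independent_set_def by auto
        moreover have "{l u..r u} \<inter> {l v..r v} = {}" unfolding l_def r_def
          using uS True pinj[OF uS True uv(3)] by auto
        ultimately show ?thesis by simp
      next
        case False then have "v \<in> K" using uv assms(2) by auto
        then show ?thesis using SK uS by simp
      qed
    next
      case uK0: False
      then have uK: "u \<in> K" using uv assms(2) by auto
      show ?thesis
      proof (cases "v \<in> S")
        case True
        then have "E v u \<longleftrightarrow> {l v..r v} \<inter> {l u..r u} \<noteq> {}" using SK uK by simp
        then show ?thesis using Esym by (auto simp: Int_commute)
      next
        case False then have "v \<in> K" using uv assms(2) by auto
        then have "E u v" using assms(5) uK uv unfolding clique_def by auto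
        moreover have "0 \<in> {l u..r u} \<inter> {l v..r v}" unfolding l_def r_def
          using uK0 False Lk0 Rk0 by auto
        ultimately show ?thesis by auto
      qed
    qed
  qed
  show ?thesis unfolding interval_graph_def using lr main by blast
qed

end
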